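(* Let $U\subseteq\mathbb{C}_{xy}$ be a $q$-open subset. Then $U$ is a Runge $q$-open subset if and only if the image of $\mathfrak{A}_q$ is dense in $\mathcal{F}_q(U)$.
   Context: Fix $q\in\mathbb{C}$ with $0<|q|<1$; $\mathfrak{A}_q$ is generated by $x,y$ with $xy=q^{-1}yx$. $V\subseteq\mathbb{C}$ is $q$-open if it is open, contains $0$ and $qV\subseteq V$. A $q$-open subset of $\mathbb{C}_{xy}=(\mathbb{C}\times\{0\})\cup(\{0\}\times\mathbb{C})$ is $U=U_x\cup U_y$ with $U_x$, $U_y$ $q$-open subsets of the coordinate lines (coordinates $z$, $w$); it is Runge $q$-open if every connected component of $U_x$ and of $U_y$ is simply connected (equivalently, polynomials are dense in $\mathcal{O}(U_x)$ and $\mathcal{O}(U_y)$). $\mathcal{F}_q(U)=\{(f,g)\in\mathcal{O}(U_x)[[y]]\oplus[[x]]\mathcal{O}(U_y):f_k^{(i)}(0)/i!=g_i^{(k)}(0)/k!\ \forall i,k\ge0\}$, where $\mathcal{O}(U_x)[[y]]$ is the Fréchet space of series $\sum_nf_n(z)y^n$, $f_n\in\mathcal{O}(U_x)$, with product topology and multiplication $f\cdot g=\sum_n(\sum_{i+j=n}f_i(z)g_j(q^iz))y^n$, and $[[x]]\mathcal{O}(U_y)$ the analogous space of series $\sum x^nf_n(w)$ with multiplication $\sum_nx^n\sum_{i+j=n}f_i(q^jw)g_j(w)$. The map $\mathfrak{A}_q\to\mathcal{F}_q(U)$ sends $\sum a_{ik}x^iy^k$ to $\big(\sum_k(\sum_ia_{ik}z^i)y^k,\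 \sum_ix^i(\sum_ka_{ik}w^k)\big)$. *)

theory Defs
  imports "HOL-Analysis.Analysis"
begin

definition q_open :: "complex \<Rightarrow> complex set \<Rightarrow> bool" where
  "q_open q V \<longleftrightarrow> open V \<and> 0 \<in> V \<and> (\<lambda>z. q * z) ` V \<subseteq> V"

definition runge_set :: "complex set \<Rightarrow> bool" where
  "runge_set V \<longleftrightarrow> (\<forall>C \<in> components V. simply_connected C)"

text \<open>A q-open subset U = U_x \<union> U_y of C_xy (given by its two pieces) is Runge.\<close>
definition runge_q_open :: "complex set \<Rightarrow> complex set \<Rightarrow> bool" where
  "runge_q_open Ux Uy \<longleftrightarrow> runge_set Ux \<and> runge_set Uy"

text \<open>The underlying set of F_q(U): pairs (f,g), f = sum f_n(z) y^n with f_n holomorphic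
  on U_x, g = sum x^n g_n(w) with g_n holomorphic on U_y, satisfying the compatibility
  condition f_k^(i)(0)/i! = g_i^(k)(0)/k!.\<close>
definition Fq :: "complex set \<Rightarrow> complex set \<Rightarrow>
    ((nat \<Rightarrow> complex \<Rightarrow> complex) \<times> (nat \<Rightarrow> complex \<Rightarrow> complex)) set" where
  "Fq Ux Uy = {(f, g). (\<forall>n. f n holomorphic_on Ux) \<and> (\<forall>n. g n holomorphic_on Uy) \<and>
      (\<forall>i k. (deriv ^^ i) (f k) 0 / of_nat (fact i) = (deriv ^^ k) (g i) 0 / of_nat (fact k))}"

text \<open>Image of the element sum_{i,k \<le> D} a i k x^i y^k of A_q in F_q(U):
  the coefficient of y^k of the first component, and of x^i of the second component.\<close>
definition img_x :: "nat \<Rightarrow> (nat \<Rightarrow> nat \<Rightarrow> complex) \<Rightarrow> nat \<Rightarrow> complex \<Rightarrow> complex" where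
  "img_x D a k z = (if k \<le> D then (\<Sum>i\<le>D. a i k * z ^ i) else 0)"

definition img_y :: "nat \<Rightarrow> (nat \<Rightarrow> nat \<Rightarrow> complex) \<Rightarrow> nat \<Rightarrow> complex \<Rightarrow> complex" where
  "img_y D a i w = (if i \<le> D then (\<Sum>k\<le>D. a i k * w ^ k) else 0)"

text \<open>Density of the image of A_q in F_q(U), where O(U_x)[[y]] \<oplus> [[x]]O(U_y) carries the
  product of the Frechet topologies of locally uniform convergence: every basic neighbourhood
  (finitely many coefficients, a compact set in each line, a radius) of every point of
  F_q(U) meets the image.\<close>
definition image_dense :: "complex set \<Rightarrow> complex set \<Rightarrow> bool" where
  "image_dense Ux Uy \<longleftrightarrow>
     (\<forall>f g. (f, g) \<in> Fq Ux Uy \<longrightarrow>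
        (\<forall>N K L (\<epsilon>::real). compact K \<and> K \<subseteq> Ux \<and> compact L \<and> L \<subseteq> Uy \<and> \<epsilon> > 0 \<longrightarrow>
           (\<exists>D a. (\<forall>k\<le>N. \<forall>z\<in>K. norm (f k z - img_x D a k z) < \<epsilon>) \<and>
                  (\<forall>i\<le>N. \<forall>w\<in>L. norm (g i w - img_y D a i w) < \<epsilon>))))"

end

theory Submission imports Defs "HOL-Complex_Analysis.Complex_Analysis" begin

definition approx :: "complex set \<Rightarrow> (complex \<Rightarrow> complex) \<Rightarrow> bool" where
  "approx S h \<longleftrightarrow> (\<forall>e>0. \<exists>p. \<forall>z\<in>S. cmod (h z - poly p z) < e)"

lemma approx_poly: "approx S (poly p)"
  unfolding approx_def by (intro allI impI exI[of _ p]) auto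

lemma approx_const: "approx S (\<lambda>z. c)"
  unfolding approx_def by (intro allI impI exI[of _ "[:c:]"]) auto

lemma approx_id: "approx S (\<lambda>z. z)"
  unfolding approx_def by (intro allI impI exI[of _ "[:0,1:]"]) auto

lemma approx_cong: "(\<And>z. z \<in> S \<Longrightarrow> h z = h' z) \<Longrightarrow> approx S h \<Longrightarrow> approx S h'"
  unfolding approx_def by auto

lemma approx_subset: "approx S h \<Longrightarrow> T \<subseteq> S \<Longrightarrow> approx T h"
  unfolding approx_def by blast

lemma approx_add:
  assumes "approx S h1" "approx S h2" shows "approx S (\<lambda>z. h1 z + h2 z)"
  unfolding approx_def
proof (intro allI impI)
  fix e :: real assume e: "e > 0"
  obtain p1 where p1: "\<forall>z\<in>S. cmod (h1 z - poly p1 z) < e/2" using assms(1) e unfolding approx_def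
    by (meson half_gt_zero)
  obtain p2 where p2: "\<forall>z\<in>S. cmod (h2 z - poly p2 z) < e/2" using assms(2) e unfolding approx_def
    by (meson half_gt_zero)
  show "\<exists>p. \<forall>z\<in>S. cmod (h1 z + h2 z - poly p z) < e"
  proof (intro exI[of _ "p1 + p2"] ballI)
    fix z assume z: "z \<in> S"
    have "cmod (h1 z + h2 z - poly (p1+p2) z) = cmod ((h1 z - poly p1 z) + (h2 z - poly p2 z))"
      by (simp add: algebra_simps)
    also have "\<dots> \<le> cmod (h1 z - poly p1 z) + cmod (h2 z - poly p2 z)" by (rule norm_triangle_ineq)
    also have "\<dots> < e" using p1 p2 z by fastforce
    finally show "cmod (h1 z + h2 z - poly (p1+p2) z) < e" .
  qed
qed

lemma approx_scale:
  assumes "approx S h" shows "approx S (\<lambda>z. c * h z)"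
  unfolding approx_def
proof (intro allI impI)
  fix e :: real assume e: "e > 0"
  have e': "e / (cmod c + 1) > 0" using e by (simp add: add_nonneg_pos)
  obtain p where p: "\<forall>z\<in>S. cmod (h z - poly p z) < e / (cmod c + 1)"
    using assms e' unfolding approx_def by blast
  show "\<exists>p. \<forall>z\<in>S. cmod (c * h z - poly p z) < e"
  proof (intro exI[of _ "smult c p"] ballI)
    fix z assume z: "z \<in> S"
    have "cmod (c * h z - poly (smult c p) z) = cmod c * cmod (h z - poly p z)"
      by (simp add: algebra_simps norm_mult[symmetric])
    also have "\<dots> \<le> (cmod c + 1) * cmod (h z - poly p z)"
      by (simp add: mult_right_mono)
    also have "\<dots> < (cmod c + 1) * (e / (cmod c + 1))"
      using p z by (intro mult_strict_left_mono) (auto simp: add_nonneg_pos)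
    also have "\<dots> = e"
    proof -
      have "cmod c + 1 \<noteq> 0" using norm_ge_zero[of c] by linarith
      then show ?thesis by simp
    qed
    finally show "cmod (c * h z - poly (smult c p) z) < e" .
  qed
qed

lemma approx_sum:
  assumes "finite I" "\<And>i. i \<in> I \<Longrightarrow> approx S (h i)"
  shows "approx S (\<lambda>z. \<Sum>i\<in>I. h i z)"
  using assms
proof (induction I rule: finite_induct)
  case empty then show ?case using approx_const[of S 0] by simp
next
  case (insert x F)
  then show ?case by (simp add: approx_add)
qed

lemma approx_bounded:
  assumes "compact S" "approx S h" shows "\<exists>B>0. \<forall>z\<in>S. cmod (h z) \<le> B"
proof -
  obtain p where p: "\<forall>z\<in>S. cmod (h z - poly p z) < 1" using assms(2) unfolding approx_def by force
  have "compact (poly p ` S)"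
    using assms(1) by (intro compact_continuous_image) (auto intro: continuous_intros)
  then obtain B where B: "B > 0" "\<forall>y\<in>poly p ` S. cmod y \<le> B"
    using compact_imp_bounded bounded_pos by metis
  show ?thesis
  proof (intro exI[of _ "B+1"] conjI ballI)
    fix z assume z: "z \<in> S"
    have "cmod (h z) \<le> cmod (h z - poly p z) + cmod (poly p z)" by (metis add.commute norm_triangle_sub)
    also have "\<dots> \<le> 1 + B" using p B z by (intro add_mono) auto
    finally show "cmod (h z) \<le> B + 1" by simp
  qed (use B in auto)
qed

lemma approx_mult:
  assumes S: "compact S" and h1: "approx S h1" and h2: "approx S h2"
  shows "approx S (\<lambda>z. h1 z * h2 z)"
  unfolding approx_def
proof (intro allI impI)
  fix e :: real assume e: "e > 0"
  obtain B1 where B1: "B1 > 0" "\<forall>z\<in>S. cmod (h1 z) \<le> B1" using approx_bounded[OF S h1] by blast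
  obtain B2 where B2: "B2 > 0" "\<forall>z\<in>S. cmod (h2 z) \<le> B2" using approx_bounded[OF S h2] by blast
  define d where "d = min 1 (e / (B1 + B2 + 2))"
  have dpos: "B1 + B2 + 2 > 0" using B1 B2 by simp
  have d1: "d \<le> e / (B1 + B2 + 2)" by (simp add: d_def)
  have d: "d > 0" "d \<le> 1" "d * (B1 + B2 + 2) \<le> e"
    using e dpos d1 by (auto simp: pos_le_divide_eq mult.commute[of d]) (auto simp: d_def)
  obtain p1 where p1: "\<forall>z\<in>S. cmod (h1 z - poly p1 z) < d" using h1 d unfolding approx_def by blast
  obtain p2 where p2: "\<forall>z\<in>S. cmod (h2 z - poly p2 z) < d" using h2 d unfolding approx_def by blast
  show "\<exists>p. \<forall>z\<in>S. cmod (h1 z * h2 z - poly p z) < e"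
  proof (intro exI[of _ "p1 * p2"] ballI)
    fix z assume z: "z \<in> S"
    have "cmod (poly p2 z) \<le> cmod (h2 z) + cmod (h2 z - poly p2 z)"
      by (metis add.commute norm_triangle_sub norm_minus_commute)
    also have "\<dots> \<le> B2 + d" using B2 p2 z by (intro add_mono) (auto intro: less_imp_le)
    finally have pb: "cmod (poly p2 z) \<le> B2 + 1" using d by simp
    have "h1 z * h2 z - poly (p1 * p2) z = h1 z * (h2 z - poly p2 z) + (h1 z - poly p1 z) * poly p2 z"
      by (simp add: algebra_simps)
    then have "cmod (h1 z * h2 z - poly (p1 * p2) z) \<le> cmod (h1 z) * cmod (h2 z - poly p2 z) + cmod (h1 z - poly p1 z) * cmod (poly p2 z)"
      by (metis norm_mult norm_triangle_ineq)
    also have "\<dots> \<le> B1 * d + d * (B2 + 1)"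
      using B1 p1 p2 z pb d by (intro add_mono mult_mono) (auto intro: less_imp_le)
    also have "\<dots> < d * (B1 + B2 + 2)" using d by (simp add: algebra_simps)
    also have "\<dots> \<le> e" using d by simp
    finally show "cmod (h1 z * h2 z - poly (p1 * p2) z) < e" .
  qed
qed

lemma approx_power:
  assumes "compact S" "approx S h" shows "approx S (\<lambda>z. h z ^ n)"
  by (induction n) (auto intro: approx_mult assms approx_const)

lemma approx_limit:
  assumes "\<And>e. e > 0 \<Longrightarrow> \<exists>h'. approx S h' \<and> (\<forall>z\<in>S. cmod (h z - h' z) \<le> e)"
  shows "approx S h"
  unfolding approx_def
proof (intro allI impI)
  fix e :: real assume e: "e > 0"
  obtain h' where h': "approx S h'" "\<forall>z\<in>S. cmod (h z - h' z) \<le> e/2" using assms[of "e/2"] e by auto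
  obtain p where p: "\<forall>z\<in>S. cmod (h' z - poly p z) < e/2" using h'(1) e unfolding approx_def
    by (meson half_gt_zero)
  show "\<exists>p. \<forall>z\<in>S. cmod (h z - poly p z) < e"
  proof (intro exI[of _ p] ballI)
    fix z assume z: "z \<in> S"
    have "cmod (h z - poly p z) \<le> cmod (h z - h' z) + cmod (h' z - poly p z)"
      by (rule norm_diff_triangle_le) auto
    also have "\<dots> < e/2 + e/2" using h' p z by (intro add_le_less_mono) auto
    finally show "cmod (h z - poly p z) < e" by simp
  qed
qed

lemma approx_geom:
  assumes S: "compact S" and G: "approx S G" and T: "approx S T" and Tb: "\<And>z. z \<in> S \<Longrightarrow> cmod (T z) \<le> 1/2"
  shows "approx S (\<lambda>z. G z / (1 - T z))"
proof (rule approx_limit)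
  fix e :: real assume e: "e > 0"
  obtain B where B: "B > 0" "\<forall>z\<in>S. cmod (G z) \<le> B" using approx_bounded[OF S G] by blast
  obtain N where N: "(1/2::real) ^ N < e / (2*B)" using real_arch_pow_inv[of "e/(2*B)" "1/2"] e B by auto
  show "\<exists>h'. approx S h' \<and> (\<forall>z\<in>S. cmod (G z / (1 - T z) - h' z) \<le> e)"
  proof (intro exI[of _ "\<lambda>z. G z * (\<Sum>n<N. T z ^ n)"] conjI ballI)
    show "approx S (\<lambda>z. G z * (\<Sum>n<N. T z ^ n))"
      by (intro approx_mult[OF S G] approx_sum approx_power[OF S T]) auto
  next
    fix z assume z: "z \<in> S"
    have t: "cmod (T z) \<le> 1/2" using Tb z .
    have t1: "T z \<noteq> 1" using t by auto
    have n1: "cmod (1 - T z) \<ge> 1/2"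
      using norm_triangle_ineq2[of 1 "T z"] t by simp
    have t1': "1 - T z \<noteq> 0" using t1 by simp
    have gs: "(\<Sum>n<N. T z ^ n) = (1 - T z ^ N) / (1 - T z)"
      using t1 by (simp add: sum_gp_strict)
    have "G z / (1 - T z) - G z * (\<Sum>n<N. T z ^ n) = G z / (1 - T z) - G z * ((1 - T z ^ N) / (1 - T z))"
      by (simp only: gs)
    also have "\<dots> = (G z - G z * (1 - T z ^ N)) / (1 - T z)"
      by (simp only: times_divide_eq_right diff_divide_distrib[symmetric])
    also have "\<dots> = G z * T z ^ N / (1 - T z)"
      by (simp add: algebra_simps)
    finally have "G z / (1 - T z) - G z * (\<Sum>n<N. T z ^ n) = G z * T z ^ N / (1 - T z)" .
    then have "cmod (G z / (1 - T z) - G z * (\<Sum>n<N. T z ^ n)) = cmod (G z) * cmod (T z) ^ N / cmod (1 - T z)"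
      by (simp add: norm_mult norm_divide norm_power)
    also have "\<dots> \<le> B * (1/2) ^ N / (1/2)"
      using B z t n1 by (intro frac_le mult_mono power_mono) auto
    also have "\<dots> \<le> e" using N B by (simp add: field_simps)
    finally show "cmod (G z / (1 - T z) - G z * (\<Sum>n<N. T z ^ n)) \<le> e" .
  qed
qed

lemma approx_pole_step:
  assumes K: "compact K" and w: "w \<notin> K" and ap: "approx K (\<lambda>z. 1 / (w - z))"
    and w': "cmod (w' - w) \<le> infdist w K / 2"
  shows "approx K (\<lambda>z. 1 / (w' - z))"
proof (cases "K = {}")
  case True then show ?thesis by (simp add: approx_def)
next
  case False
  have d: "infdist w K > 0" using infdist_pos_not_in_closed[OF compact_imp_closed[OF K] False w] .
  have dz: "cmod (w - z) \<ge> infdist w K" if "z \<in> K" for z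
    using infdist_le[OF that, of w] by (simp add: dist_norm)
  have "approx K (\<lambda>z. (1 / (w - z)) / (1 - (w - w') * (1 / (w - z))))"
  proof (rule approx_geom[OF K ap])
    show "approx K (\<lambda>z. (w - w') * (1 / (w - z)))" by (rule approx_scale[OF ap])
    fix z assume z: "z \<in> K"
    have "cmod ((w - w') * (1 / (w - z))) = cmod (w' - w) / cmod (w - z)"
      by (simp add: norm_mult norm_divide norm_minus_commute)
    also have "\<dots> \<le> (infdist w K / 2) / infdist w K"
      using w' dz[OF z] d by (intro frac_le) auto
    also have "\<dots> = 1/2" using d by simp
    finally show "cmod ((w - w') * (1 / (w - z))) \<le> 1/2" .
  qed
  then show ?thesis
  proof (rule approx_cong[rotated])
    fix z assume z: "z \<in> K"
    have wz: "w - z \<noteq> 0" using w z by auto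
    have "cmod (w' - w) < cmod (w - z)" using w' dz[OF z] d by linarith
    then have w'z: "w' - z \<noteq> 0" by (auto simp: norm_minus_commute)
    show "1 / (w - z) / (1 - (w - w') * (1 / (w - z))) = 1 / (w' - z)"
      using wz w'z by (simp add: field_simps)
  qed
qed

lemma approx_pole:
  assumes K: "compact K" and conn: "connected (- K)" and w: "w \<notin> K"
  shows "approx K (\<lambda>z. 1 / (w - z))"
proof (cases "K = {}")
  case True then show ?thesis by (simp add: approx_def)
next
  case False
  obtain R where R: "R > 0" "\<forall>z\<in>K. cmod z \<le> R"
    using compact_imp_bounded[OF K] bounded_pos by metis
  define w0 where "w0 = complex_of_real (2*R+1)"
  have nw0: "cmod w0 = 2*R+1" using R unfolding w0_def norm_of_real by simp
  have w0K: "w0 \<notin> K" using R nw0 by force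
  have P0: "approx K (\<lambda>z. 1 / (w0 - z))"
  proof -
    have "approx K (\<lambda>z. (1/w0) / (1 - (1/w0) * z))"
    proof (rule approx_geom[OF K approx_const])
      show "approx K (\<lambda>z. (1/w0) * z)" by (rule approx_scale[OF approx_id])
      fix z assume z: "z \<in> K"
      have "cmod ((1/w0) * z) = cmod z / (2*R+1)" by (simp add: norm_mult norm_divide nw0)
      also have "\<dots> \<le> R / (2*R+1)" using R z by (intro divide_right_mono) auto
      also have "\<dots> \<le> 1/2" using R by (simp add: field_simps)
      finally show "cmod ((1/w0) * z) \<le> 1/2" .
    qed
    then show ?thesis
    proof (rule approx_cong[rotated])
      fix z assume z: "z \<in> K"
      have "w0 \<noteq> 0" using nw0 R by auto
      moreover have "w0 - z \<noteq> 0" using z w0K by auto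
      ultimately show "1 / w0 / (1 - 1 / w0 * z) = 1 / (w0 - z)" by (simp add: field_simps)
    qed
  qed
  have closedK: "closed K" using K by (rule compact_imp_closed)
  show ?thesis
  proof (rule connected_induction_simple[OF conn, where P = "\<lambda>w. approx K (\<lambda>z. 1 / (w - z))"])
    show "w0 \<in> - K" "w \<in> - K" using w0K w by auto
    show "approx K (\<lambda>z. 1 / (w0 - z))" by (rule P0)
    fix a assume a: "a \<in> - K"
    define d where "d = infdist a K"
    have d: "d > 0" using infdist_pos_not_in_closed[OF closedK False] a by (auto simp: d_def)
    have sub: "ball a (d/5) \<subseteq> - K"
    proof
      fix x assume x: "x \<in> ball a (d/5)"
      show "x \<in> - K"
      proof
        assume "x \<in> K"
        then have "d \<le> dist a x" using infdist_le[of x K a] by (simp add: d_def)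
        with x d show False by (simp add: dist_commute)
      qed
    qed
    show "\<exists>T. openin (top_of_set (- K)) T \<and> a \<in> T \<and> (\<forall>x\<in>T. \<forall>y\<in>T. approx K (\<lambda>z. 1 / (x - z)) \<longrightarrow> approx K (\<lambda>z. 1 / (y - z)))"
    proof (intro exI[of _ "ball a (d/5)"] conjI ballI impI)
      show "openin (top_of_set (- K)) (ball a (d / 5))"
        using sub by (simp add: openin_open_eq open_Compl closedK)
      show "a \<in> ball a (d/5)" using d by simp
      fix x y assume x: "x \<in> ball a (d/5)" and y: "y \<in> ball a (d/5)" and ax: "approx K (\<lambda>z. 1 / (x - z))"
      have xK: "x \<notin> K" using sub x by auto
      have "infdist a K \<le> infdist x K + dist a x" by (rule infdist_triangle)
      then have ix: "infdist x K \<ge> 4*d/5" using x by (simp add: d_def dist_commute)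
      have "cmod (y - x) \<le> dist y a + dist a x" using dist_triangle[of y x a] by (simp add: dist_norm)
      also have "\<dots> \<le> 2*d/5" using x y by (simp add: dist_commute)
      also have "\<dots> \<le> infdist x K / 2" using ix by simp
      finally show "approx K (\<lambda>z. 1 / (y - z))"
        by (rule approx_pole_step[OF K xK ax])
    qed
  qed
qed



lemma integral_piece_bound:
  fixes h :: "real \<Rightarrow> complex"
  assumes cont: "continuous_on {a..b} h" and ab: "a \<le> b" and e: "\<And>t. t \<in> {a..b} \<Longrightarrow> cmod (h t - h a) \<le> e"
  shows "cmod (integral {a..b} h - of_real (b - a) * h a) \<le> (b - a) * e"
proof -
  have e0: "0 \<le> e" using e[of a] ab by (metis atLeastAtMost_iff norm_ge_zero order.trans order_refl)
  have hi: "(h has_integral integral {a..b} h) {a..b}"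
    using integrable_continuous_real[OF cont] by (rule integrable_integral)
  have ci: "((\<lambda>t. h a) has_integral (b - a) *\<^sub>R h a) {a..b}"
    using has_integral_const_real[of "h a" a b] ab by simp
  have "((\<lambda>t. h t - h a) has_integral (integral {a..b} h - (b - a) *\<^sub>R h a)) {a..b}"
    by (rule has_integral_diff[OF hi ci])
  then have "cmod (integral {a..b} h - (b - a) *\<^sub>R h a) \<le> e * Henstock_Kurzweil_Integration.content {a..b}"
    by (rule has_integral_bound_real[OF e0 finite.emptyI]) (use e in auto)
  then show ?thesis using ab by (simp add: scaleR_conv_of_real mult.commute)
qed

lemma integral_split_uniform:
  fixes h :: "real \<Rightarrow> complex"
  assumes cont: "continuous_on {0..1} h" and M: "M > 0"
  shows "integral {0..1} h = (\<Sum>j<M. integral {real j / real M .. real (Suc j) / real M} h)"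
proof -
  have "k \<le> M \<Longrightarrow> integral {0..real k / real M} h = (\<Sum>j<k. integral {real j / real M .. real (Suc j) / real M} h)" for k
  proof (induction k)
    case 0 then show ?case by simp
  next
    case (Suc k)
    have le1: "real (Suc k) / real M \<le> 1" using Suc.prems M by simp
    have "integral {0..real k / real M} h + integral {real k / real M..real (Suc k) / real M} h
          = integral {0..real (Suc k) / real M} h"
    proof (rule Henstock_Kurzweil_Integration.integral_combine)
      show "0 \<le> real k / real M" by simp
      show "real k / real M \<le> real (Suc k) / real M" by (simp add: divide_right_mono)
      show "h integrable_on {0..real (Suc k) / real M}"
        by (rule integrable_continuous_real) (rule continuous_on_subset[OF cont], use le1 in auto)
    qed
    then show ?case using Suc by simp
  qed
  from this[of M] show ?thesis using M by simp
qed

lemma riemann_sum_approx: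
  fixes \<Phi> :: "real \<Rightarrow> complex \<Rightarrow> complex"
  assumes Z: "compact Z" and cont: "continuous_on ({0..1} \<times> Z) (\<lambda>(t,z). \<Phi> t z)" and e: "e > 0"
  shows "\<exists>M>0. \<forall>z\<in>Z. cmod (integral {0..1} (\<lambda>t. \<Phi> t z) - (\<Sum>j<M. of_real (1 / real M) * \<Phi> (real j / real M) z)) \<le> e"
proof -
  have "compact ({0..1::real} \<times> Z)" using Z by (intro compact_Times) auto
  then have "uniformly_continuous_on ({0..1} \<times> Z) (\<lambda>(t,z). \<Phi> t z)"
    using cont compact_uniformly_continuous by blast
  then obtain d where d: "d > 0" and ud: "\<And>x x'. x \<in> {0..1} \<times> Z \<Longrightarrow> x' \<in> {0..1} \<times> Z \<Longrightarrow> dist x' x < d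
      \<Longrightarrow> dist ((\<lambda>(t,z). \<Phi> t z) x') ((\<lambda>(t,z). \<Phi> t z) x) < e"
    unfolding uniformly_continuous_on_def using e by metis
  obtain n where n: "inverse (real (Suc n)) < d" using reals_Archimedean[OF d] by blast
  define M where "M = Suc n"
  have M: "M > 0" "1 / real M < d" using n by (auto simp: M_def field_simps)
  show ?thesis
  proof (intro exI[of _ M] conjI ballI)
    show "M > 0" by (rule M)
    fix z assume z: "z \<in> Z"
    have contz: "continuous_on {0..1} (\<lambda>t. \<Phi> t z)"
    proof -
      have "continuous_on {0..1} ((\<lambda>(t,z). \<Phi> t z) \<circ> (\<lambda>t. (t, z)))"
        by (rule continuous_on_compose) (auto intro!: continuous_intros continuous_on_subset[OF cont] simp: z)
      then show ?thesis by (simp add: o_def)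
    qed
    have piece: "cmod (integral {real j / real M .. real (Suc j) / real M} (\<lambda>t. \<Phi> t z) - of_real (1 / real M) * \<Phi> (real j / real M) z)
                \<le> (1 / real M) * e" if j: "j < M" for j
    proof -
      have le1: "real (Suc j) / real M \<le> 1" using j by simp
      have "cmod (integral {real j / real M .. real (Suc j) / real M} (\<lambda>t. \<Phi> t z) - of_real (real (Suc j) / real M - real j / real M) * \<Phi> (real j / real M) z)
                \<le> (real (Suc j) / real M - real j / real M) * e"
      proof (rule integral_piece_bound)
        show "continuous_on {real j / real M..real (Suc j) / real M} (\<lambda>t. \<Phi> t z)"
          by (rule continuous_on_subset[OF contz]) (use le1 in auto)
        show "real j / real M \<le> real (Suc j) / real M" by (simp add: divide_right_mono)
        fix t assume t: "t \<in> {real j / real M..real (Suc j) / real M}"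
        have t0: "0 \<le> t" using t by (smt (verit) atLeastAtMost_iff divide_nonneg_nonneg of_nat_0_le_iff)
        have t01: "t \<in> {0..1}" using t le1 t0 by auto
        have j01: "real j / real M \<in> {0..1}" using j by auto
        have "dist (t, z) (real j / real M, z) = \<bar>t - real j / real M\<bar>" by (simp add: dist_Pair_Pair dist_real_def)
        also have "\<dots> \<le> 1 / real M" using t by (auto simp: abs_if add_divide_distrib)
        also have "\<dots> < d" using M by simp
        finally have "dist (\<Phi> t z) (\<Phi> (real j / real M) z) < e"
          using ud[of "(real j / real M, z)" "(t, z)"] t01 j01 z by auto
        then show "cmod (\<Phi> t z - \<Phi> (real j / real M) z) \<le> e" by (simp add: dist_norm)
      qed
      moreover have eq: "real (Suc j) / real M - real j / real M = 1 / real M" by (simp add: add_divide_distrib)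
      ultimately show ?thesis by (simp only: eq)
    qed
    have "integral {0..1} (\<lambda>t. \<Phi> t z) - (\<Sum>j<M. of_real (1 / real M) * \<Phi> (real j / real M) z)
        = (\<Sum>j<M. integral {real j / real M .. real (Suc j) / real M} (\<lambda>t. \<Phi> t z) - of_real (1 / real M) * \<Phi> (real j / real M) z)"
      using integral_split_uniform[OF contz M(1)] by (simp add: sum_subtractf)
    then have "cmod (integral {0..1} (\<lambda>t. \<Phi> t z) - (\<Sum>j<M. of_real (1 / real M) * \<Phi> (real j / real M) z))
        = cmod (\<Sum>j<M. integral {real j / real M .. real (Suc j) / real M} (\<lambda>t. \<Phi> t z) - of_real (1 / real M) * \<Phi> (real j / real M) z)"
      by (simp only:)
    also have "\<dots> \<le> (\<Sum>j<M. cmod (integral {real j / real M .. real (Suc j) / real M} (\<lambda>t. \<Phi> t z) - of_real (1 / real M) * \<Phi> (real j / real M) z))"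
      by (rule norm_sum)
    also have "\<dots> \<le> (\<Sum>j<M. (1 / real M) * e)"
      by (rule sum_mono) (use piece in auto)
    also have "\<dots> = e" using M by simp
    finally show "cmod (integral {0..1} (\<lambda>t. \<Phi> t z) - (\<Sum>j<M. of_real (1 / real M) * \<Phi> (real j / real M) z)) \<le> e" .
  qed
qed



lemma div_helper: "(a::complex) \<noteq> 0 \<Longrightarrow> b \<noteq> 0 \<Longrightarrow> D / (a / b) / b = D / a"
  by (simp add: field_simps)

lemma approx_param_integral:
  fixes A B :: "real \<Rightarrow> complex"
  assumes K: "compact K" and conn: "connected (- K)"
    and contA: "continuous_on {0..1} A" and contB: "continuous_on {0..1} B"
    and BK: "\<And>t. t \<in> {0..1} \<Longrightarrow> B t \<notin> K"
  shows "approx K (\<lambda>z. integral {0..1} (\<lambda>t. A t / (B t - z)))"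
proof (rule approx_limit)
  fix e :: real assume e: "e > 0"
  have cont: "continuous_on ({0..1} \<times> K) (\<lambda>(t,z). A t / (B t - z))"
  proof -
    have "continuous_on ({0..1} \<times> K) (\<lambda>x. A (fst x) / (B (fst x) - snd x))"
    proof (rule continuous_on_divide)
      show "continuous_on ({0..1} \<times> K) (\<lambda>x. A (fst x))"
        by (rule continuous_on_compose2[OF contA]) (auto intro: continuous_intros)
      have "continuous_on ({0..1} \<times> K) (\<lambda>x. B (fst x))"
        by (rule continuous_on_compose2[OF contB]) (auto intro: continuous_intros)
      then show "continuous_on ({0..1} \<times> K) (\<lambda>x. B (fst x) - snd x)"
        by (intro continuous_intros)
      show "\<forall>x\<in>{0..1} \<times> K. B (fst x) - snd x \<noteq> 0"
        using BK by (auto simp: mem_Times_iff)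
    qed
    then show ?thesis by (simp add: case_prod_beta')
  qed
  obtain M where M: "M > 0" and RS: "\<forall>z\<in>K. cmod (integral {0..1} (\<lambda>t. A t / (B t - z))
        - (\<Sum>j<M. of_real (1 / real M) * (A (real j / real M) / (B (real j / real M) - z)))) \<le> e"
    using riemann_sum_approx[OF K _ e, of "\<lambda>t z. A t / (B t - z)"] cont by auto
  show "\<exists>h'. approx K h' \<and> (\<forall>z\<in>K. cmod (integral {0..1} (\<lambda>t. A t / (B t - z)) - h' z) \<le> e)"
  proof (intro exI conjI)
    show "approx K (\<lambda>z. \<Sum>j<M. of_real (1 / real M) * (A (real j / real M) / (B (real j / real M) - z)))"
    proof (rule approx_sum)
      fix j assume j: "j \<in> {..<M}"
      have j01: "real j / real M \<in> {0..1}" using j by auto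
      have "approx K (\<lambda>z. (of_real (1 / real M) * A (real j / real M)) * (1 / (B (real j / real M) - z)))"
        by (rule approx_scale, rule approx_pole[OF K conn BK[OF j01]])
      then show "approx K (\<lambda>z. of_real (1 / real M) * (A (real j / real M) / (B (real j / real M) - z)))"
        by (rule approx_cong[rotated]) simp
    qed simp
  qed (use RS in auto)
qed

lemma riemann_param:
  fixes C L :: "complex set"
  assumes C: "open C" "simply_connected C" and L: "compact L" "L \<subseteq> C" and Cne: "C \<noteq> {}"
  shows "\<exists>g r. 0 < r \<and> r < 1 \<and> g holomorphic_on ball 0 1 \<and> inj_on g (ball 0 1) \<and>
              g ` ball 0 1 \<subseteq> C \<and> L \<subseteq> g ` ball 0 r"
proof -
  consider "C = UNIV" | f g where "f holomorphic_on C" "g holomorphic_on ball 0 1"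
        "\<forall>z\<in>C. f z \<in> ball 0 1 \<and> g (f z) = z" "\<forall>z\<in>ball 0 1. g z \<in> C \<and> f (g z) = z"
    using simply_connected_eq_biholomorphic_to_disc[OF C(1)] C(2) Cne by blast
  then show ?thesis
  proof cases
    case 1
    obtain R where R: "R > 0" "L \<subseteq> ball 0 R"
      using bounded_subset_ballD[OF compact_imp_bounded[OF L(1)], of 0] by blast
    show ?thesis
    proof (intro exI[of _ "\<lambda>v::complex. of_real (2*R) * v"] exI[of _ "1/2"] conjI)
      show "(\<lambda>v::complex. of_real (2*R) * v) holomorphic_on ball 0 1" by (intro holomorphic_intros)
      show "inj_on (\<lambda>v::complex. of_real (2*R) * v) (ball 0 1)" using R by (auto simp: inj_on_def)
      show "(\<lambda>v::complex. of_real (2*R) * v) ` ball 0 1 \<subseteq> C" using 1 by simp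
      show "L \<subseteq> (\<lambda>v::complex. of_real (2*R) * v) ` ball 0 (1/2)"
      proof
        fix z assume z: "z \<in> L"
        have zR: "cmod z < R" using R z by auto
        have "z = of_real (2*R) * (z / of_real (2*R))" using R by simp
        moreover have "z / of_real (2*R) \<in> ball 0 (1/2)"
          using zR R by (simp add: norm_divide field_simps)
        ultimately show "z \<in> (\<lambda>v::complex. of_real (2*R) * v) ` ball 0 (1/2)" by blast
      qed
    qed auto
  next
    case 2
    note fg = 2
    have "continuous_on L f"
      using holomorphic_on_imp_continuous_on[OF fg(1)] L(2) continuous_on_subset by blast
    then have cfL: "compact (f ` L)" using L(1) by (rule compact_continuous_image)
    obtain r where r: "0 < r" "r < 1" "f ` L \<subseteq> ball 0 r"
    proof (cases "L = {}")
      case True then show ?thesis using that[of "1/2"] by auto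
    next
      case False
      have cn: "continuous_on (f ` L) norm" by (intro continuous_intros)
      have "compact (norm ` f ` L)" by (rule compact_continuous_image[OF cn cfL])
      then obtain m where m: "m \<in> norm ` f ` L" "\<forall>t\<in>norm ` f ` L. t \<le> m"
        using compact_attains_sup[of "norm ` f ` L"] False by blast
      have m1: "m < 1" using m(1) fg(3) L(2) by auto
      show ?thesis
      proof (rule that[of "(1 + max m 0)/2"])
        show "0 < (1 + max m 0)/2" by simp
        show "(1 + max m 0)/2 < 1" using m1 by simp
        show "f ` L \<subseteq> ball 0 ((1 + max m 0)/2)"
          using m(2) m1 by (fastforce simp: image_iff)
      qed
    qed
    show ?thesis
    proof (intro exI[of _ g] exI[of _ r] conjI)
      show "inj_on g (ball 0 1)" by (metis fg(4) inj_onI)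
      show "g ` ball 0 1 \<subseteq> C" using fg(4) by auto
      show "L \<subseteq> g ` ball 0 r"
      proof
        fix z assume z: "z \<in> L"
        then have "z = g (f z)" using fg(3) L(2) by auto
        moreover have "f z \<in> ball 0 r" using r(3) z by auto
        ultimately show "z \<in> g ` ball 0 r" by blast
      qed
    qed (use r fg in auto)
  qed
qed

lemma cauchy_rep_in:
  assumes g: "g holomorphic_on ball 0 1" "inj_on g (ball 0 1)" "g ` ball 0 1 \<subseteq> C"
    and F: "F holomorphic_on C" and r: "0 < r" "r < 1" and z: "z \<in> g ` ball 0 r"
  shows "contour_integral (circlepath 0 r) (\<lambda>v. deriv g v * F (g v) / (g v - z)) = 2 * of_real pi * \<i> * F z"
proof -
  obtain u0 where u0: "u0 \<in> ball 0 r" "z = g u0" using z by blast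
  have u01: "u0 \<in> ball 0 1" using u0 r by auto
  define Q where "Q = (\<lambda>v. if v = u0 then deriv g u0 else (g v - g u0) / (v - u0))"
  have Qh: "Q holomorphic_on ball 0 1" unfolding Q_def
    by (rule pole_lemma[OF g(1)]) (use u01 in auto)
  have dg0: "deriv g u0 \<noteq> 0"
    by (rule holomorphic_injective_imp_regular[OF g(1) _ g(2) u01]) simp
  have Qnz: "Q v \<noteq> 0" if "v \<in> ball 0 1" for v
  proof (cases "v = u0")
    case True then show ?thesis using dg0 by (simp add: Q_def)
  next
    case False
    then have "g v \<noteq> g u0" using g(2) that u01 by (meson inj_onD)
    then show ?thesis using False by (simp add: Q_def)
  qed
  have Fg: "(\<lambda>v. F (g v)) holomorphic_on ball 0 1"
    using holomorphic_on_compose_gen[OF g(1) F g(3)] by (simp add: o_def)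
  have dg: "deriv g holomorphic_on ball 0 1" by (rule holomorphic_deriv[OF g(1)]) simp
  define H where "H = (\<lambda>v. deriv g v * F (g v) / Q v)"
  have Hh: "H holomorphic_on ball 0 1" unfolding H_def
    using Qnz by (intro holomorphic_intros dg Fg Qh) auto
  have "((\<lambda>v. H v / (v - u0)) has_contour_integral 2 * of_real pi * \<i> * H u0) (circlepath 0 r)"
  proof (rule Cauchy_integral_circlepath)
    show "continuous_on (cball 0 r) H"
      by (rule continuous_on_subset[OF holomorphic_on_imp_continuous_on[OF Hh]]) (use r in auto)
    show "H holomorphic_on ball 0 r" by (rule holomorphic_on_subset[OF Hh]) (use r in auto)
    show "cmod (u0 - 0) < r" using u0 by simp
  qed
  then have "((\<lambda>v. deriv g v * F (g v) / (g v - z)) has_contour_integral 2 * of_real pi * \<i> * H u0) (circlepath 0 r)"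
  proof (rule has_contour_integral_eq)
    fix v assume v: "v \<in> path_image (circlepath 0 r)"
    then have vr: "cmod v = r" using r by (simp add: path_image_circlepath)
    then have vu: "v \<noteq> u0" using u0 by auto
    have v1: "v \<in> ball 0 1" using vr r by simp
    have "g v \<noteq> g u0" using g(2) vu v1 u01 by (meson inj_onD)
    then show "H v / (v - u0) = deriv g v * F (g v) / (g v - z)"
      using vu by (simp add: H_def Q_def u0(2) div_helper)
  qed
  moreover have "H u0 = F z" using dg0 by (simp add: H_def Q_def u0(2))
  ultimately show ?thesis by (simp add: contour_integral_unique)
qed

lemma cauchy_rep_out:
  assumes g: "g holomorphic_on ball 0 1" "g ` ball 0 1 \<subseteq> C"
    and F: "F holomorphic_on C" and r: "0 < r" "r < 1" and z: "z \<notin> g ` ball 0 1"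
  shows "contour_integral (circlepath 0 r) (\<lambda>v. deriv g v * F (g v) / (g v - z)) = 0"
proof -
  have Fg: "(\<lambda>v. F (g v)) holomorphic_on ball 0 1"
    using holomorphic_on_compose_gen[OF g(1) F g(2)] by (simp add: o_def)
  have dg: "deriv g holomorphic_on ball 0 1" by (rule holomorphic_deriv[OF g(1)]) simp
  have "((\<lambda>v. deriv g v * F (g v) / (g v - z)) has_contour_integral 0) (circlepath 0 r)"
  proof (rule Cauchy_theorem_convex_simple)
    show "(\<lambda>v. deriv g v * F (g v) / (g v - z)) holomorphic_on ball 0 1"
      using z by (intro holomorphic_intros dg Fg g(1)) auto
    show "path_image (circlepath 0 r) \<subseteq> ball 0 1" using r by (auto simp: path_image_circlepath)
  qed auto
  then show ?thesis by (rule contour_integral_unique)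
qed



lemma connected_compl_Union:
  fixes H :: "'c \<Rightarrow> complex set"
  assumes "finite F" "\<And>C. C \<in> F \<Longrightarrow> compact (H C)" "\<And>C. C \<in> F \<Longrightarrow> connected (- H C)"
    "\<And>C C'. C \<in> F \<Longrightarrow> C' \<in> F \<Longrightarrow> C \<noteq> C' \<Longrightarrow> H C \<inter> H C' = {}"
  shows "connected (- \<Union>(H ` F))"
  using assms
proof (induction F rule: finite_induct)
  case empty then show ?case by (simp add: connected_UNIV)
next
  case (insert x F)
  have IH: "connected (- \<Union>(H ` F))" using insert by auto
  have "connected (- (H x \<union> \<Union>(H ` F)))"
  proof (rule Janiszewski_connected)
    show "compact (H x)" using insert by auto
    show "closed (\<Union>(H ` F))" using insert by (intro closed_Union) (auto intro: compact_imp_closed)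
    have "H x \<inter> \<Union>(H ` F) = {}" using insert(2) insert.prems(3) by fastforce
    then show "connected (H x \<inter> \<Union>(H ` F))" by simp
    show "connected (- H x)" using insert by auto
  qed (rule IH)
  then show ?case by simp
qed

lemma runge:
  fixes U K :: "complex set"
  assumes U: "open U" "\<And>C. C \<in> components U \<Longrightarrow> simply_connected C"
    and f: "f holomorphic_on U" and K: "compact K" "K \<subseteq> U"
  shows "approx K f"
proof -
  obtain F where F: "F \<subseteq> components U" "finite F" "K \<subseteq> \<Union>F"
    using compactE[OF K(1), of "components U"] K(2) open_components[OF U(1)] Union_components[of U] by metis
  have Copen: "open C" if "C \<in> F" for C using open_components[OF U(1)] F(1) that by auto
  have Csc: "simply_connected C" if "C \<in> F" for C using U(2) F(1) that by auto
  have CU: "C \<subseteq> U" if "C \<in> F" for C using in_components_subset F(1) that by auto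
  have Cne: "C \<noteq> {}" if "C \<in> F" for C using in_components_nonempty F(1) that by auto
  have Cdisj: "C \<inter> C' = {}" if "C \<in> F" "C' \<in> F" "C \<noteq> C'" for C C'
    using components_nonoverlap F(1) that by auto
  define L where "L C = K \<inter> C" for C
  define H where "H C = L C \<union> inside (L C)" for C
  have Lc: "compact (L C)" if C: "C \<in> F" for C
  proof -
    have "L C = K - \<Union>(components U - {C})"
    proof
      show "L C \<subseteq> K - \<Union>(components U - {C})"
        using components_nonoverlap[of C U] F(1) C by (auto simp: L_def)
      show "K - \<Union>(components U - {C}) \<subseteq> L C"
      proof
        fix x assume x: "x \<in> K - \<Union>(components U - {C})"
        then have "x \<in> \<Union>(components U)" using K(2) Union_components[of U] by auto
        then obtain C' where C': "C' \<in> components U" "x \<in> C'" by blast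
        then have "C' = C" using x by auto
        then show "x \<in> L C" using x C' by (auto simp: L_def)
      qed
    qed
    moreover have "open (\<Union>(components U - {C}))" using open_components[OF U(1)] by auto
    ultimately show ?thesis using K(1) by (simp add: compact_diff)
  qed
  have Hc: "compact (H C)" if C: "C \<in> F" for C
  proof -
    have "H C = - outside (L C)" by (simp add: H_def union_with_inside)
    moreover have "closed (- outside (L C))" using Lc[OF C] by (intro closed_Compl open_outside compact_imp_closed)
    moreover have "bounded (H C)" unfolding H_def using Lc[OF C]
      by (simp add: bounded_inside compact_imp_bounded)
    ultimately show ?thesis by (simp add: compact_eq_bounded_closed)
  qed
  have HC: "H C \<subseteq> C" if C: "C \<in> F" for C
    using subset_simply_connected_imp_inside_subset[OF Csc[OF C] Copen[OF C], of "L C"] by (auto simp: H_def L_def)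
  have Hconn: "connected (- H C)" if C: "C \<in> F" for C
  proof -
    have "- H C = outside (L C)" by (simp add: H_def union_with_inside)
    then show ?thesis using Lc[OF C] by (simp add: connected_outside compact_imp_bounded)
  qed
  define K' where "K' = \<Union>(H ` F)"
  have K'c: "compact K'" unfolding K'_def using F(2) Hc by (intro compact_Union) auto
  have K'conn: "connected (- K')" unfolding K'_def
  proof (rule connected_compl_Union[OF F(2) Hc Hconn])
    fix C C' assume "C \<in> F" "C' \<in> F" "C \<noteq> C'"
    then show "H C \<inter> H C' = {}" using HC[of C] HC[of C'] Cdisj[of C C'] by blast
  qed
  have KK': "K \<subseteq> K'" using F(3) by (auto simp: K'_def H_def L_def)
  define P where "P C g r \<longleftrightarrow> 0 < r \<and> r < 1 \<and> g holomorphic_on ball 0 1 \<and> inj_on g (ball 0 1) \<and>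
              g ` ball 0 1 \<subseteq> C \<and> H C \<subseteq> g ` ball 0 r" for C g r
  have ex: "\<forall>C\<in>F. \<exists>g. \<exists>r. P C g r"
  proof
    fix C assume C: "C \<in> F"
    show "\<exists>g. \<exists>r. P C g r" unfolding P_def
      by (rule riemann_param[OF Copen[OF C] Csc[OF C] Hc[OF C] HC[OF C] Cne[OF C]])
  qed
  obtain G where G: "\<forall>C\<in>F. \<exists>r. P C (G C) r" using bchoice[OF ex] by blast
  obtain R where GR': "\<forall>C\<in>F. P C (G C) (R C)" using bchoice[OF G] by blast
  have GR: "0 < R C \<and> R C < 1 \<and> G C holomorphic_on ball 0 1 \<and> inj_on (G C) (ball 0 1) \<and>
              G C ` ball 0 1 \<subseteq> C \<and> H C \<subseteq> G C ` ball 0 (R C)" if "C \<in> F" for C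
    using GR' that unfolding P_def by blast
  define T where "T C z = contour_integral (circlepath 0 (R C)) (\<lambda>v. deriv (G C) v * f (G C v) / (G C v - z))" for C z
  have fC: "f holomorphic_on C" if "C \<in> F" for C using holomorphic_on_subset[OF f CU[OF that]] .
  have rep: "f z = (\<Sum>C\<in>F. (1 / (2 * of_real pi * \<i>)) * T C z)" if z: "z \<in> K'" for z
  proof -
    obtain C0 where C0: "C0 \<in> F" "z \<in> H C0" using z by (auto simp: K'_def)
    have "T C0 z = 2 * of_real pi * \<i> * f z"
      unfolding T_def using GR[OF C0(1)] C0(2) by (intro cauchy_rep_in[OF _ _ _ fC[OF C0(1)]]) auto
    moreover have "T C z = 0" if C: "C \<in> F - {C0}" for C
    proof -
      have "z \<in> C0" using HC[OF C0(1)] C0(2) by auto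
      then have "z \<notin> G C ` ball 0 1" using GR[of C] C Cdisj[of C C0] C0(1) by auto
      then show ?thesis
        unfolding T_def using GR[of C] C by (intro cauchy_rep_out[OF _ _ fC[of C]]) auto
    qed
    ultimately have "(\<Sum>C\<in>F. (1 / (2 * of_real pi * \<i>)) * T C z) = (1 / (2 * of_real pi * \<i>)) * (2 * of_real pi * \<i> * f z)"
      using F(2) C0(1) by (subst sum.remove[of F C0]) auto
    then show ?thesis by simp
  qed
  have apT: "approx K' (T C)" if C: "C \<in> F" for C
  proof -
    define g where "g = G C"
    define r where "r = R C"
    have g: "g holomorphic_on ball 0 1" "inj_on g (ball 0 1)" "g ` ball 0 1 \<subseteq> C" "H C \<subseteq> g ` ball 0 r"
      and r: "0 < r" "r < 1" using GR[OF C] by (auto simp: g_def r_def)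
    define c where "c = circlepath 0 r"
    have cimg: "c t \<in> sphere 0 r" for t using r by (simp add: c_def circlepath norm_mult)
    have cball1: "c t \<in> ball 0 1" for t using cimg[of t] r by auto
    have contc: "continuous_on {0..1} c" unfolding c_def by (simp add: circlepath continuous_intros)
    define A where "A t = deriv g (c t) * f (g (c t)) * (of_real (2 * pi) * \<i> * of_real r * exp (2 * of_real pi * \<i> * of_real t))" for t
    define B where "B t = g (c t)" for t
    have dg: "deriv g holomorphic_on ball 0 1" by (rule holomorphic_deriv[OF g(1)]) simp
    have Fg: "(\<lambda>v. f (g v)) holomorphic_on ball 0 1"
      using holomorphic_on_compose_gen[OF g(1) fC[OF C] g(3)] by (simp add: o_def)
    have contB: "continuous_on {0..1} B" unfolding B_def
      by (rule continuous_on_compose2[OF holomorphic_on_imp_continuous_on[OF g(1)] contc]) (use cball1 in auto)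
    have contA: "continuous_on {0..1} A" unfolding A_def
    proof (intro continuous_intros)
      show "continuous_on {0..1} (\<lambda>x. deriv g (c x))"
        by (rule continuous_on_compose2[OF holomorphic_on_imp_continuous_on[OF dg] contc]) (use cball1 in auto)
      show "continuous_on {0..1} (\<lambda>x. f (g (c x)))"
        by (rule continuous_on_compose2[OF holomorphic_on_imp_continuous_on[OF Fg] contc]) (use cball1 in auto)
    qed
    have BK: "B t \<notin> K'" for t
    proof
      assume BK: "B t \<in> K'"
      then obtain C' where C': "C' \<in> F" "B t \<in> H C'" by (auto simp: K'_def)
      have BC: "B t \<in> C" using g(3) cball1[of t] by (auto simp: B_def)
      show False
      proof (cases "C' = C")
        case True
        then obtain u where u: "u \<in> ball 0 r" "B t = g u" using C' g(4) by auto
        have "c t = u" using g(2) u r cball1[of t] by (auto simp: B_def inj_on_def)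
        then show False using cimg[of t] u by simp
      next
        case False
        then show False using HC[OF C'(1)] C'(2) BC Cdisj[OF C C'(1)] by auto
      qed
    qed
    have "approx K' (\<lambda>z. integral {0..1} (\<lambda>t. A t / (B t - z)))"
      by (rule approx_param_integral[OF K'c K'conn contA contB]) (use BK in auto)
    then show ?thesis
    proof (rule approx_cong[rotated])
      fix z assume z: "z \<in> K'"
      show "integral {0..1} (\<lambda>t. A t / (B t - z)) = T C z"
        unfolding T_def contour_integral_integral g_def[symmetric] r_def[symmetric] c_def[symmetric]
        by (rule integral_cong) (simp add: A_def B_def c_def vector_derivative_circlepath field_simps)
    qed
  qed
  have "approx K' (\<lambda>z. \<Sum>C\<in>F. (1 / (2 * of_real pi * \<i>)) * T C z)"
    using F(2) apT by (intro approx_sum approx_scale) auto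
  then have "approx K' f" by (rule approx_cong[rotated]) (simp add: rep)
  then show ?thesis using KK' by (rule approx_subset)
qed



lemma higher_deriv_poly: "(deriv ^^ i) (poly P) = poly ((pderiv ^^ i) P)"
proof (induction i)
  case 0 then show ?case by simp
next
  case (Suc i)
  have "deriv (poly ((pderiv ^^ i) P)) = poly (pderiv ((pderiv ^^ i) P))"
    by (rule ext, rule DERIV_imp_deriv, rule poly_DERIV)
  then show ?case using Suc by simp
qed

lemma higher_deriv_poly_0: "(deriv ^^ i) (poly (P::complex poly)) 0 = of_nat (fact i) * coeff P i"
  by (simp add: higher_deriv_poly poly_0_coeff_0 coeff_higher_pderiv pochhammer_fact[symmetric])

lemma coeff_cauchy_est:
  assumes V: "open V" and F: "F holomorphic_on V" and rho: "0 < rho" "cball 0 rho \<subseteq> V"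
    and bnd: "\<And>z. z \<in> sphere 0 rho \<Longrightarrow> cmod (F z - poly P z) \<le> d"
  shows "cmod ((deriv ^^ i) F 0 / of_nat (fact i) - coeff P i) \<le> d / rho ^ i"
proof -
  have h: "(\<lambda>z. F z - poly P z) holomorphic_on V" using F by (intro holomorphic_intros)
  have "cmod ((deriv ^^ i) (\<lambda>z. F z - poly P z) 0) \<le> fact i * d / rho ^ i"
  proof (rule Cauchy_inequality)
    show "(\<lambda>z. F z - poly P z) holomorphic_on ball 0 rho"
      by (rule holomorphic_on_subset[OF h]) (use rho in auto)
    show "continuous_on (cball 0 rho) (\<lambda>z. F z - poly P z)"
      by (rule continuous_on_subset[OF holomorphic_on_imp_continuous_on[OF h] rho(2)])
    show "0 < rho" by (rule rho)
    fix x assume "cmod (0 - x) = rho"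
    then show "cmod (F x - poly P x) \<le> d" using bnd by simp
  qed
  moreover have "(deriv ^^ i) (\<lambda>z. F z - poly P z) 0 = (deriv ^^ i) F 0 - (deriv ^^ i) (poly P) 0"
    by (rule higher_deriv_diff[OF F _ V]) (use rho in \<open>auto intro: holomorphic_intros\<close>)
  ultimately have "cmod ((deriv ^^ i) F 0 - of_nat (fact i) * coeff P i) \<le> fact i * d / rho ^ i"
    by (simp add: higher_deriv_poly_0)
  moreover have "(deriv ^^ i) F 0 / of_nat (fact i) - coeff P i = ((deriv ^^ i) F 0 - of_nat (fact i) * coeff P i) / of_nat (fact i)"
    by (simp add: field_simps)
  ultimately show ?thesis
    by (simp add: norm_divide field_simps)
qed

lemma side_approx:
  fixes V K :: "complex set"
  assumes V: "open V" "\<And>C. C \<in> components V \<Longrightarrow> simply_connected C" "0 \<in> V"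
    and F: "F holomorphic_on V" and K: "compact K" "K \<subseteq> V" and e: "e > 0"
  shows "\<exists>P. \<forall>z\<in>K. cmod (F z - (poly P z + (\<Sum>i\<le>N. ((deriv ^^ i) F 0 / of_nat (fact i) - coeff P i) * z ^ i))) < e"
proof -
  obtain e0 where e0: "e0 > 0" "ball 0 e0 \<subseteq> V" using V(1,3) openE by blast
  define rho where "rho = e0 / 2"
  have rho: "0 < rho" "cball 0 rho \<subseteq> V" using e0 by (auto simp: rho_def)
  obtain R0 where R0: "R0 > 0" "\<forall>z\<in>K. cmod z \<le> R0" using compact_imp_bounded[OF K(1)] bounded_pos by metis
  define R where "R = R0 + 1"
  have R: "R \<ge> 1" "\<forall>z\<in>K. cmod z \<le> R" using R0 by (auto simp: R_def)
  define B where "B = (\<Sum>i\<le>N. (R / rho) ^ i)"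
  have B0: "B \<ge> 0" unfolding B_def using R rho by (intro sum_nonneg) auto
  define d where "d = (e / 2) / (1 + B)"
  have B1: "1 + B > 0" using B0 by simp
  have d: "d > 0" "d * (1 + B) < e"
  proof -
    show "d > 0" using e B1 by (simp add: d_def)
    have "d * (1 + B) = e / 2" using B0 unfolding d_def by (simp add: divide_eq_eq)
    then show "d * (1 + B) < e" using e by simp
  qed
  define K1 where "K1 = K \<union> cball 0 rho"
  have K1: "compact K1" "K1 \<subseteq> V" using K rho by (auto simp: K1_def)
  obtain P where P: "\<forall>z\<in>K1. cmod (F z - poly P z) < d"
    using runge[OF V(1) V(2) F K1] d(1) unfolding approx_def by blast
  have ce: "cmod ((deriv ^^ i) F 0 / of_nat (fact i) - coeff P i) \<le> d / rho ^ i" for i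
  proof (rule coeff_cauchy_est[OF V(1) F rho])
    fix z :: complex assume "z \<in> sphere 0 rho"
    then have "z \<in> K1" by (auto simp: K1_def)
    then show "cmod (F z - poly P z) \<le> d" using P by (meson less_imp_le)
  qed
  show ?thesis
  proof (intro exI[of _ P] ballI)
    fix z assume z: "z \<in> K"
    let ?S = "\<Sum>i\<le>N. ((deriv ^^ i) F 0 / of_nat (fact i) - coeff P i) * z ^ i"
    have "cmod ?S \<le> (\<Sum>i\<le>N. cmod (((deriv ^^ i) F 0 / of_nat (fact i) - coeff P i) * z ^ i))"
      by (rule norm_sum)
    also have "\<dots> \<le> (\<Sum>i\<le>N. d / rho ^ i * R ^ i)"
    proof (rule sum_mono)
      fix i assume "i \<in> {..N}"
      have "cmod (((deriv ^^ i) F 0 / of_nat (fact i) - coeff P i) * z ^ i)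
          = cmod ((deriv ^^ i) F 0 / of_nat (fact i) - coeff P i) * cmod z ^ i" by (simp add: norm_mult norm_power)
      also have "\<dots> \<le> d / rho ^ i * R ^ i"
        using ce[of i] R z d rho by (intro mult_mono power_mono) auto
      finally show "cmod (((deriv ^^ i) F 0 / of_nat (fact i) - coeff P i) * z ^ i) \<le> d / rho ^ i * R ^ i" .
    qed
    also have "\<dots> = d * B" by (simp add: B_def sum_distrib_left power_divide)
    finally have Sb: "cmod ?S \<le> d * B" .
    have eq: "F z - (poly P z + ?S) = (F z - poly P z) - ?S" by simp
    have "cmod (F z - (poly P z + ?S)) \<le> cmod (F z - poly P z) + cmod ?S"
      unfolding eq by (rule norm_triangle_ineq4)
    also have "\<dots> < d + d * B" using P z Sb by (intro add_less_le_mono) (auto simp: K1_def)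
    also have "\<dots> < e" using d by (simp add: algebra_simps)
    finally show "cmod (F z - (poly P z + ?S)) < e" .
  qed
qed

lemma poly_sum_le:
  assumes "degree p \<le> D" shows "poly p (z::complex) = (\<Sum>i\<le>D. coeff p i * z ^ i)"
proof -
  have "(\<Sum>i\<le>D. coeff p i * z ^ i) = (\<Sum>i\<le>degree p. coeff p i * z ^ i)"
    by (rule sum.mono_neutral_right) (use assms in \<open>auto simp: coeff_eq_0\<close>)
  then show ?thesis by (simp add: poly_altdef)
qed

lemma sum_if_le:
  assumes "N \<le> (D::nat)" shows "(\<Sum>i\<le>D. if i \<le> N then h i else 0) = (\<Sum>i\<le>N. h i)"
proof (rule sum.mono_neutral_cong_right)
  show "finite {..D}" by simp
  show "{..N} \<subseteq> {..D}" using assms by auto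
qed auto


lemma runge_setD: "runge_set V \<Longrightarrow> C \<in> components V \<Longrightarrow> simply_connected C"
  unfolding runge_set_def by blast

lemma forward_dense:
  assumes qx: "q_open q Ux" and qy: "q_open q Uy" and R: "runge_q_open Ux Uy"
  shows "image_dense Ux Uy"
  unfolding image_dense_def
proof (intro allI impI)
  fix f g assume fg: "(f, g) \<in> Fq Ux Uy"
  fix N K L and e :: real assume KL: "compact K \<and> K \<subseteq> Ux \<and> compact L \<and> L \<subseteq> Uy \<and> e > 0"
  have hf: "\<And>n. f n holomorphic_on Ux" and hg: "\<And>n. g n holomorphic_on Uy"
    and compat: "\<And>i k. (deriv ^^ i) (f k) 0 / of_nat (fact i) = (deriv ^^ k) (g i) 0 / of_nat (fact k)"
    using fg by (auto simp: Fq_def)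
  have Ux: "open Ux" "0 \<in> Ux" and Uy: "open Uy" "0 \<in> Uy" using qx qy by (auto simp: q_open_def)
  have rx: "\<And>C. C \<in> components Ux \<Longrightarrow> simply_connected C"
    and ry: "\<And>C. C \<in> components Uy \<Longrightarrow> simply_connected C"
    using R by (auto simp: runge_q_open_def runge_set_def)
  have "\<forall>k. \<exists>P. \<forall>z\<in>K. cmod (f k z - (poly P z + (\<Sum>i\<le>N. ((deriv ^^ i) (f k) 0 / of_nat (fact i) - coeff P i) * z ^ i))) < e"
  proof
    fix k show "\<exists>P. \<forall>z\<in>K. cmod (f k z - (poly P z + (\<Sum>i\<le>N. ((deriv ^^ i) (f k) 0 / of_nat (fact i) - coeff P i) * z ^ i))) < e"
      by (rule side_approx[OF Ux(1) rx Ux(2) hf]) (use KL in auto)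
  qed
  from choice[OF this] obtain P where P: "\<forall>k. \<forall>z\<in>K. cmod (f k z - (poly (P k) z + (\<Sum>i\<le>N. ((deriv ^^ i) (f k) 0 / of_nat (fact i) - coeff (P k) i) * z ^ i))) < e"
    ..
  have "\<forall>i. \<exists>Q. \<forall>w\<in>L. cmod (g i w - (poly Q w + (\<Sum>k\<le>N. ((deriv ^^ k) (g i) 0 / of_nat (fact k) - coeff Q k) * w ^ k))) < e"
  proof
    fix i show "\<exists>Q. \<forall>w\<in>L. cmod (g i w - (poly Q w + (\<Sum>k\<le>N. ((deriv ^^ k) (g i) 0 / of_nat (fact k) - coeff Q k) * w ^ k))) < e"
      by (rule side_approx[OF Uy(1) ry Uy(2) hg]) (use KL in auto)
  qed
  from choice[OF this] obtain Q where Q: "\<forall>i. \<forall>w\<in>L. cmod (g i w - (poly (Q i) w + (\<Sum>k\<le>N. ((deriv ^^ k) (g i) 0 / of_nat (fact k) - coeff (Q i) k) * w ^ k))) < e"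
    ..
  define cx where "cx i k = (deriv ^^ i) (f k) 0 / of_nat (fact i)" for i k
  have cy: "(deriv ^^ k) (g i) 0 / of_nat (fact k) = cx i k" for i k unfolding cx_def by (rule compat[symmetric])
  define a where "a i k = (if i \<le> N \<and> k \<le> N then cx i k else if k \<le> N then coeff (P k) i
                           else if i \<le> N then coeff (Q i) k else 0)" for i k
  define D where "D = N + (\<Sum>k\<le>N. degree (P k)) + (\<Sum>i\<le>N. degree (Q i))"
  have ND: "N \<le> D" by (simp add: D_def)
  have degP: "degree (P k) \<le> D" if "k \<le> N" for k
  proof -
    have "degree (P k) \<le> (\<Sum>k\<le>N. degree (P k))" by (rule member_le_sum) (use that in auto)
    then show ?thesis by (simp add: D_def)
  qed
  have degQ: "degree (Q i) \<le> D" if "i \<le> N" for i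
  proof -
    have "degree (Q i) \<le> (\<Sum>i\<le>N. degree (Q i))" by (rule member_le_sum) (use that in auto)
    then show ?thesis by (simp add: D_def)
  qed
  show "\<exists>D a. (\<forall>k\<le>N. \<forall>z\<in>K. cmod (f k z - img_x D a k z) < e) \<and>
              (\<forall>i\<le>N. \<forall>w\<in>L. cmod (g i w - img_y D a i w) < e)"
  proof (intro exI[of _ D] exI[of _ a] conjI allI impI ballI)
    fix k z assume k: "k \<le> N" and z: "z \<in> K"
    have "img_x D a k z = (\<Sum>i\<le>D. a i k * z ^ i)" using k ND by (simp add: img_x_def)
    also have "\<dots> = (\<Sum>i\<le>D. coeff (P k) i * z ^ i + (if i \<le> N then (cx i k - coeff (P k) i) * z ^ i else 0))"
      by (rule sum.cong) (use k in \<open>auto simp: a_def algebra_simps\<close>)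
    also have "\<dots> = poly (P k) z + (\<Sum>i\<le>N. (cx i k - coeff (P k) i) * z ^ i)"
      by (simp add: sum.distrib sum_if_le[OF ND] poly_sum_le[OF degP[OF k]])
    finally have eq: "img_x D a k z = poly (P k) z + (\<Sum>i\<le>N. (cx i k - coeff (P k) i) * z ^ i)" .
    show "cmod (f k z - img_x D a k z) < e" using P z unfolding eq cx_def by blast
  next
    fix i w assume i: "i \<le> N" and w: "w \<in> L"
    have "img_y D a i w = (\<Sum>k\<le>D. a i k * w ^ k)" using i ND by (simp add: img_y_def)
    also have "\<dots> = (\<Sum>k\<le>D. coeff (Q i) k * w ^ k + (if k \<le> N then (cx i k - coeff (Q i) k) * w ^ k else 0))"
      by (rule sum.cong) (use i in \<open>auto simp: a_def algebra_simps\<close>)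
    also have "\<dots> = poly (Q i) w + (\<Sum>k\<le>N. (cx i k - coeff (Q i) k) * w ^ k)"
      by (simp add: sum.distrib sum_if_le[OF ND] poly_sum_le[OF degQ[OF i]])
    finally have eq: "img_y D a i w = poly (Q i) w + (\<Sum>k\<le>N. (cx i k - coeff (Q i) k) * w ^ k)" .
    show "cmod (g i w - img_y D a i w) < e" using Q w unfolding eq cy[symmetric] by blast
  qed
qed


lemma higher_deriv_zero: "(deriv ^^ k) (\<lambda>w. 0::complex) = (\<lambda>w. 0)"
  by (induction k) (simp_all add: deriv_const)

lemma higher_deriv_const_Suc: "(deriv ^^ Suc k) (\<lambda>w. c::complex) = (\<lambda>w. 0)"
proof -
  have "(deriv ^^ Suc k) (\<lambda>w. c) = (deriv ^^ k) (deriv (\<lambda>w. c))" by (simp add: funpow_Suc_right)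
  also have "\<dots> = (\<lambda>w. 0)" by (simp add: deriv_const higher_deriv_zero)
  finally show ?thesis .
qed

lemma bad_function:
  fixes V C :: "complex set"
  assumes V: "open V" and C: "C \<in> components V" and nsc: "\<not> simply_connected C"
  shows "\<exists>h K e. h holomorphic_on V \<and> compact K \<and> K \<subseteq> V \<and> e > 0 \<and>
           (\<forall>c D. \<exists>z\<in>K. e \<le> cmod (h z - (\<Sum>i\<le>D. c i * z ^ i)))"
proof -
  have Copen: "open C" using open_components[OF V C] .
  have Cconn: "connected C" using in_components_connected[OF C] .
  have CV: "C \<subseteq> V" using in_components_subset[OF C] .
  obtain \<gamma> F where \<gamma>: "valid_path \<gamma>" "path_image \<gamma> \<subseteq> C" "pathfinish \<gamma> = pathstart \<gamma>"
    and F: "F holomorphic_on C" and nz: "\<not> (F has_contour_integral 0) \<gamma>"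
    using simply_connected_eq_contour_integral_zero[OF Copen] nsc Cconn by blast
  define I where "I = contour_integral \<gamma> F"
  have hasI: "(F has_contour_integral I) \<gamma>" unfolding I_def
    by (rule has_contour_integral_integral[OF contour_integrable_holomorphic_simple[OF F Copen \<gamma>(1,2)]])
  have I0: "I \<noteq> 0" using hasI nz by auto
  define h where "h z = (if z \<in> C then F z else 0)" for z
  obtain T where T: "closed T" "C = V \<inter> T"
    using closedin_component[OF C] closedin_closed by metis
  have VC: "open (V - C)" using V T by (simp add: Diff_Int open_Diff)
  have "(\<lambda>z. if z \<in> C then F z else (\<lambda>_. 0) z) holomorphic_on C \<union> (V - C)"
    by (rule holomorphic_on_If_Un[OF F _ Copen VC]) (auto intro: holomorphic_intros)
  moreover have "C \<union> (V - C) = V" using CV by auto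
  moreover have "h = (\<lambda>z. if z \<in> C then F z else (\<lambda>_. 0) z)" by (simp add: h_def fun_eq_iff)
  ultimately have hol: "h holomorphic_on V" by (simp only:)
  define PI where "PI = path_image \<gamma>"
  have PIc: "compact PI" unfolding PI_def by (rule compact_path_image[OF valid_path_imp_path[OF \<gamma>(1)]])
  have PIC: "PI \<subseteq> C" using \<gamma>(2) by (simp add: PI_def)
  obtain \<delta> where \<delta>: "\<delta> > 0" "(\<Union>x\<in>PI. cball x \<delta>) \<subseteq> C"
    by (rule compact_subset_open_imp_cball_epsilon_subset[OF PIc Copen PIC])
  define Kc where "Kc = (\<Union>x\<in>PI. cball x \<delta>)"
  define S where "S = (\<Union>x\<in>PI. ball x \<delta>)"
  have Kcc: "compact Kc" unfolding Kc_def by (rule compact_minkowski_sum_cball[OF PIc])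
  have KcV: "Kc \<subseteq> V" using \<delta>(2) CV by (auto simp: Kc_def)
  have Sopen: "open S" by (auto simp: S_def)
  have PIS: "path_image \<gamma> \<subseteq> S" using \<delta>(1) by (auto simp: S_def PI_def)
  have SKc: "S \<subseteq> Kc" by (auto simp: S_def Kc_def)
  obtain Lb where Lb: "Lb > 0" "\<And>f B. f holomorphic_on S \<and> (\<forall>z\<in>S. cmod (f z) \<le> B) \<Longrightarrow> cmod (contour_integral \<gamma> f) \<le> Lb * B"
    using contour_integral_bound_exists[OF Sopen \<gamma>(1) PIS] by blast
  define e where "e = cmod I / (2 * Lb)"
  have e: "e > 0" using I0 Lb by (simp add: e_def)
  show ?thesis
  proof (intro exI[of _ h] exI[of _ Kc] exI[of _ e] conjI hol Kcc KcV e allI)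
    fix c :: "nat \<Rightarrow> complex" and D :: nat
    show "\<exists>z\<in>Kc. e \<le> cmod (h z - (\<Sum>i\<le>D. c i * z ^ i))"
    proof (rule ccontr)
      assume "\<not> ?thesis"
      then have close: "\<forall>z\<in>Kc. cmod (h z - (\<Sum>i\<le>D. c i * z ^ i)) < e" by (auto simp: not_le)
      define p where "p z = (\<Sum>i\<le>D. c i * z ^ i)" for z
      have ph: "p holomorphic_on UNIV" unfolding p_def by (intro holomorphic_intros)
      have p0: "(p has_contour_integral 0) \<gamma>"
        by (rule Cauchy_theorem_convex_simple[OF ph]) (use \<gamma> in auto)
      have hI: "(h has_contour_integral I) \<gamma>"
        by (rule has_contour_integral_eq[OF hasI]) (use \<gamma>(2) in \<open>auto simp: h_def\<close>)
      have "((\<lambda>z. h z - p z) has_contour_integral I - 0) \<gamma>" by (rule has_contour_integral_diff[OF hI p0])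
      then have ci: "contour_integral \<gamma> (\<lambda>z. h z - p z) = I" by (simp add: contour_integral_unique)
      have "cmod (contour_integral \<gamma> (\<lambda>z. h z - p z)) \<le> Lb * e"
      proof (rule Lb(2), intro conjI ballI)
        have hS: "h holomorphic_on S" by (rule holomorphic_on_subset[OF hol]) (use SKc KcV in auto)
        have pS: "p holomorphic_on S" by (rule holomorphic_on_subset[OF ph]) auto
        show "(\<lambda>z. h z - p z) holomorphic_on S" by (rule holomorphic_on_diff[OF hS pS])
        fix z assume "z \<in> S"
        then have "z \<in> Kc" using SKc by auto
        then have "cmod (h z - p z) < e" using close by (simp add: p_def)
        then show "cmod (h z - p z) \<le> e" by (rule less_imp_le)
      qed
      then have "cmod I \<le> cmod I / 2" using Lb(1) by (simp add: ci e_def)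
      then show False using I0 by simp
    qed
  qed
qed

lemma backward_x:
  assumes dense: "image_dense Ux Uy" and Ux: "open Ux"
  shows "runge_set Ux"
  unfolding runge_set_def
proof (rule ballI, rule ccontr)
  fix C assume C: "C \<in> components Ux" and nsc: "\<not> simply_connected C"
  obtain h K e where h: "h holomorphic_on Ux" "compact K" "K \<subseteq> Ux" "e > 0"
    and bad: "\<And>c D. \<exists>z\<in>K. e \<le> cmod (h z - (\<Sum>i\<le>D. c i * z ^ i))"
    using bad_function[OF Ux C nsc] by blast
  define f where "f n = (if n = 0 then h else (\<lambda>z. 0))" for n :: nat
  define g where "g i = (\<lambda>w::complex. (deriv ^^ i) h 0 / of_nat (fact i))" for i
  have "(f, g) \<in> Fq Ux Uy"
    unfolding Fq_def
  proof (intro CollectI case_prodI conjI allI)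
    fix n show "f n holomorphic_on Ux" using h(1) by (auto simp: f_def intro: holomorphic_intros)
    show "g n holomorphic_on Uy" by (simp add: g_def)
  next
    fix i k :: nat
    show "(deriv ^^ i) (f k) 0 / of_nat (fact i) = (deriv ^^ k) (g i) 0 / of_nat (fact k)"
    proof (cases k)
      case 0 then show ?thesis by (simp add: f_def g_def)
    next
      case (Suc m) then show ?thesis
        by (simp add: f_def g_def higher_deriv_zero higher_deriv_const_Suc del: funpow.simps)
    qed
  qed
  note FG = this
  have inst: "compact K \<and> K \<subseteq> Ux \<and> compact ({}::complex set) \<and> {} \<subseteq> Uy \<and> e > 0" using h by auto
  obtain D a where Da: "\<forall>k\<le>0. \<forall>z\<in>K. cmod (f k z - img_x D a k z) < e"
    using dense[unfolded image_dense_def, rule_format, OF FG inst] by blast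
  obtain z where z: "z \<in> K" "e \<le> cmod (h z - (\<Sum>i\<le>D. a i 0 * z ^ i))" using bad[of "\<lambda>i. a i 0" D] by blast
  have "cmod (f 0 z - img_x D a 0 z) < e" using Da z(1) by blast
  then show False using z(2) by (simp add: f_def img_x_def)
qed

lemma backward_y:
  assumes dense: "image_dense Ux Uy" and Uy: "open Uy"
  shows "runge_set Uy"
  unfolding runge_set_def
proof (rule ballI, rule ccontr)
  fix C assume C: "C \<in> components Uy" and nsc: "\<not> simply_connected C"
  obtain h L e where h: "h holomorphic_on Uy" "compact L" "L \<subseteq> Uy" "e > 0"
    and bad: "\<And>c D. \<exists>z\<in>L. e \<le> cmod (h z - (\<Sum>i\<le>D. c i * z ^ i))"
    using bad_function[OF Uy C nsc] by blast
  define g where "g n = (if n = 0 then h else (\<lambda>z. 0))" for n :: nat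
  define f where "f k = (\<lambda>w::complex. (deriv ^^ k) h 0 / of_nat (fact k))" for k
  have "(f, g) \<in> Fq Ux Uy"
    unfolding Fq_def
  proof (intro CollectI case_prodI conjI allI)
    fix n show "g n holomorphic_on Uy" using h(1) by (auto simp: g_def intro: holomorphic_intros)
    show "f n holomorphic_on Ux" by (simp add: f_def)
  next
    fix i k :: nat
    show "(deriv ^^ i) (f k) 0 / of_nat (fact i) = (deriv ^^ k) (g i) 0 / of_nat (fact k)"
    proof (cases i)
      case 0 then show ?thesis by (simp add: f_def g_def)
    next
      case (Suc m) then show ?thesis
        by (simp add: f_def g_def higher_deriv_zero higher_deriv_const_Suc del: funpow.simps)
    qed
  qed
  note FG = this
  have inst: "compact ({}::complex set) \<and> {} \<subseteq> Ux \<and> compact L \<and> L \<subseteq> Uy \<and> e > 0" using h by auto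
  obtain D a where Da: "\<forall>i\<le>0. \<forall>w\<in>L. cmod (g i w - img_y D a i w) < e"
    using dense[unfolded image_dense_def, rule_format, OF FG inst] by blast
  obtain z where z: "z \<in> L" "e \<le> cmod (h z - (\<Sum>i\<le>D. a 0 i * z ^ i))" using bad[of "\<lambda>i. a 0 i" D] by blast
  have "cmod (g 0 z - img_y D a 0 z) < e" using Da z(1) by blast
  then show False using z(2) by (simp add: g_def img_y_def)
qed

theorem proposition7p2:
  fixes q :: complex and Ux Uy :: "complex set"
  assumes "0 < norm q" and "norm q < 1"
    and "q_open q Ux" and "q_open q Uy"
  shows "runge_q_open Ux Uy \<longleftrightarrow> image_dense Ux Uy"
proof
  assume "runge_q_open Ux Uy"
  then show "image_dense Ux Uy" using forward_dense assms(3,4) by blast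
next
  assume d: "image_dense Ux Uy"
  have "open Ux" "open Uy" using assms(3,4) by (auto simp: q_open_def)
  then show "runge_q_open Ux Uy" unfolding runge_q_open_def using backward_x[OF d] backward_y[OF d] by blast
qed

end
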